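(* Let $k$ and $d$ be positive integers with $k\geq 2d$, and let $G^d_k$ be the circular clique graph. Then $\chi(G^d_k)\geq box(G^d_k)$.
   Context: The circular clique $G^d_k$ (for positive integers $k\ge 2d$) is the simple graph with vertex set $\{a_j : 0\leq j\leq k-1\}$ in which $a_ia_j$ is an edge if and only if $d\leq |i-j|\leq k-d$. $\chi(G)$ denotes the chromatic number. An $\ell$-box is a Cartesian product $[x_1,y_1]\times\cdots\times[x_\ell,y_\ell]$ of $\ell$ closed bounded real intervals; the boxicity $box(G)$ of a graph $G$ is the least positive integer $\ell$ such that $G$ is isomorphic to the intersection graph of a family of $\ell$-boxes (vertices are boxes, adjacent iff the boxes intersect). *)

theory Defs
  imports Complex_Main
begin

text \<open>A simple graph is given by a vertex set V and a symmetric irreflexive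
adjacency relation E (only its restriction to V matters).\<close>

text \<open>Circular clique G^d_k: vertices a_0,...,a_{k-1}, represented by the naturals
0..k-1; a_i a_j is an edge iff d \<le> |i - j| \<le> k - d.\<close>
definition circ_clique_adj :: "nat \<Rightarrow> nat \<Rightarrow> nat \<Rightarrow> nat \<Rightarrow> bool" where
  "circ_clique_adj k d i j \<longleftrightarrow>
     i < k \<and> j < k \<and> int d \<le> \<bar>int i - int j\<bar> \<and> \<bar>int i - int j\<bar> \<le> int k - int d"

definition circ_clique_vertices :: "nat \<Rightarrow> nat set" where
  "circ_clique_vertices k = {..<k}"

definition proper_colouring :: "'a set \<Rightarrow> ('a \<Rightarrow> 'a \<Rightarrow> bool) \<Rightarrow> nat \<Rightarrow> ('a \<Rightarrow> nat) \<Rightarrow> bool" where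
  "proper_colouring V E n c \<longleftrightarrow>
     (\<forall>v\<in>V. c v < n) \<and> (\<forall>u\<in>V. \<forall>v\<in>V. E u v \<longrightarrow> c u \<noteq> c v)"

definition chromatic_number :: "'a set \<Rightarrow> ('a \<Rightarrow> 'a \<Rightarrow> bool) \<Rightarrow> nat" where
  "chromatic_number V E = (LEAST n. \<exists>c. proper_colouring V E n c)"

text \<open>An l-box representation: each vertex v gets the box
  [fst (B v 0), snd (B v 0)] \<times> ... \<times> [fst (B v (l-1)), snd (B v (l-1))]
  (closed bounded nonempty intervals), and distinct vertices are adjacent iff
  their boxes intersect, i.e. the intervals overlap in every coordinate.\<close>
definition box_representation ::
  "'a set \<Rightarrow> ('a \<Rightarrow> 'a \<Rightarrow> bool) \<Rightarrow> nat \<Rightarrow> ('a \<Rightarrow> nat \<Rightarrow> real \<times> real) \<Rightarrow> bool" where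
  "box_representation V E l B \<longleftrightarrow>
     (\<forall>v\<in>V. \<forall>i<l. fst (B v i) \<le> snd (B v i)) \<and>
     (\<forall>u\<in>V. \<forall>v\<in>V. u \<noteq> v \<longrightarrow>
        (E u v \<longleftrightarrow> (\<forall>i<l. fst (B u i) \<le> snd (B v i) \<and> fst (B v i) \<le> snd (B u i))))"

definition boxicity :: "'a set \<Rightarrow> ('a \<Rightarrow> 'a \<Rightarrow> bool) \<Rightarrow> nat" where
  "boxicity V E = (LEAST l. l \<ge> 1 \<and> (\<exists>B. box_representation V E l B))"

end

theory Submission
  imports Defs
begin

definition cpos :: "nat \<Rightarrow> nat \<Rightarrow> nat \<Rightarrow> nat" where
  "cpos k c v = (if c \<le> v then v - c else v + k - c)"

definition crgt :: "nat \<Rightarrow> nat \<Rightarrow> nat \<Rightarrow> nat" where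
  "crgt k d p = (if p + d < k then min (p + (k - d)) (k - 1) else p)"

lemma adj_pos:
  assumes "circ_clique_adj k d u v" "c \<le> k" "0 < c"
  shows "cpos k c u < cpos k c v \<Longrightarrow> d \<le> cpos k c v - cpos k c u \<and> cpos k c v - cpos k c u \<le> k - d"
  using assms unfolding circ_clique_adj_def cpos_def by (auto split: if_splits)

lemma adj_sym: "circ_clique_adj k d u v \<Longrightarrow> circ_clique_adj k d v u"
  unfolding circ_clique_adj_def by auto

lemma pos_lt: "v < k \<Longrightarrow> c \<le> k \<Longrightarrow> 0 < c \<Longrightarrow> cpos k c v < k"
  unfolding cpos_def by auto

lemma pos_inj: "u < k \<Longrightarrow> v < k \<Longrightarrow> c \<le> k \<Longrightarrow> cpos k c u = cpos k c v \<Longrightarrow> u = v"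
  unfolding cpos_def by (auto split: if_splits)

lemma edge_int:
  assumes "circ_clique_adj k d u v" "c \<le> k" "0 < c" "0 < d"
  shows "cpos k c u \<le> crgt k d (cpos k c v) \<and> cpos k c v \<le> crgt k d (cpos k c u)"
proof -
  have uk: "u < k" "v < k" using assms(1) unfolding circ_clique_adj_def by auto
  have "u \<noteq> v" using assms(1,4) unfolding circ_clique_adj_def by auto
  hence ne: "cpos k c u \<noteq> cpos k c v" using pos_inj[OF uk assms(2)] by blast
  have "cpos k c u < k" "cpos k c v < k" using pos_lt uk assms by auto
  moreover have "cpos k c u < cpos k c v \<Longrightarrow> d \<le> cpos k c v - cpos k c u \<and> cpos k c v - cpos k c u \<le> k - d"
    using adj_pos assms(1-3) by blast
  moreover have "cpos k c v < cpos k c u \<Longrightarrow> d \<le> cpos k c u - cpos k c v \<and> cpos k c u - cpos k c v \<le> k - d"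
    using adj_pos[OF adj_sym[OF assms(1)]] assms(2,3) by blast
  ultimately show ?thesis using ne unfolding crgt_def
    by (cases "cpos k c u < cpos k c v"; simp; linarith)
qed

definition ccut :: "nat \<Rightarrow> nat \<Rightarrow> nat \<Rightarrow> nat" where
  "ccut k d t = min (Suc t * d) k"

lemma ccut_ok: "0 < d \<Longrightarrow> 0 < k \<Longrightarrow> ccut k d t \<le> k \<and> 0 < ccut k d t"
  unfolding ccut_def by auto

definition disj :: "nat \<Rightarrow> nat \<Rightarrow> nat \<Rightarrow> nat \<Rightarrow> nat \<Rightarrow> bool" where
  "disj k d c u v \<longleftrightarrow> \<not> (cpos k c u \<le> crgt k d (cpos k c v) \<and> cpos k c v \<le> crgt k d (cpos k c u))"

lemma nonedge_lt:
  assumes "u < v" "v < k" "\<not> circ_clique_adj k d u v" "0 < d" "2 * d \<le> k" "k \<le> n * d"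
  shows "\<exists>t<n. disj k d (ccut k d t) u v"
proof -
  have "v - u < d \<or> v - u > k - d" using assms unfolding circ_clique_adj_def by auto
  then show ?thesis
  proof
    assume w: "v - u > k - d"
    have n0: "0 < n" using assms by (cases n) auto
    have "ccut k d (n - 1) = k" using assms n0 unfolding ccut_def by (simp add: min_def)
    moreover have "disj k d k u v"
    proof -
      have "cpos k k u = u" "cpos k k v = v" using assms unfolding cpos_def by auto
      moreover have "\<not> v \<le> crgt k d u" using w assms unfolding crgt_def by auto
      ultimately show ?thesis unfolding disj_def by simp
    qed
    ultimately show ?thesis using n0 by (metis diff_less zero_less_one)
  next
    assume w: "v - u < d"
    define t where "t = u div d"
    have e: "u = t*d + u mod d" by (simp add: t_def)
    have "u mod d < d" using assms(4) by simp
    hence t1: "t * d \<le> u" "u < Suc t * d" using e by simp_all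
    have tn: "t < n"
    proof (rule ccontr)
      assume "\<not> t < n" then have "n * d \<le> t * d" by simp
      then show False using t1 assms by linarith
    qed
    show ?thesis
    proof (cases "v < Suc t * d")
      case True
      have "ccut k d t - d \<le> u \<and> v < ccut k d t"
      proof (cases "Suc t * d \<le> k")
        case True then show ?thesis using t1 \<open>v < Suc t * d\<close> unfolding ccut_def by auto
      next
        case False then show ?thesis using t1 assms unfolding ccut_def by auto
      qed
      hence "disj k d (ccut k d t) u v" using assms ccut_ok[of d k t]
      proof -
        assume h: "ccut k d t - d \<le> u \<and> v < ccut k d t"
        define c where "c = ccut k d t"
        have c: "c \<le> k" "0 < c" using ccut_ok[of d k t] assms c_def by auto
        have "cpos k c u = u + k - c" "cpos k c v = v + k - c" using h c assms unfolding c_def[symmetric] cpos_def by auto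
        moreover have "\<not> u + k - c + d < k" "\<not> v + k - c + d < k" using h c assms unfolding c_def[symmetric] by auto
        ultimately have "disj k d c u v" unfolding disj_def crgt_def using assms c by auto
        then show ?thesis unfolding c_def .
      qed
      then show ?thesis using tn by blast
    next
      case False
      have "ccut k d t = Suc t * d" using False assms unfolding ccut_def by auto
      hence "disj k d (ccut k d t) u v"
      proof -
        assume h: "ccut k d t = Suc t * d"
        define c where "c = ccut k d t"
        have c: "c \<le> k" "0 < c" using ccut_ok[of d k t] assms c_def by auto
        have uc: "u < c" "c \<le> v" using h t1 False unfolding c_def by auto
        have "cpos k c u = u + k - c" "cpos k c v = v - c" using uc c unfolding cpos_def by auto
        moreover have "v - c + d < k" using uc w c assms by linarith
        moreover have "v - c + (k - d) < u + k - c" using uc w c assms by linarith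
        ultimately have "disj k d c u v" unfolding disj_def crgt_def by auto
        then show ?thesis unfolding c_def .
      qed
      then show ?thesis using tn by blast
    qed
  qed
qed

lemma modinj: "(x::nat) < k \<Longrightarrow> y < k \<Longrightarrow> (x + d) mod k = (y + d) mod k \<Longrightarrow> x = y"
proof (induction x y rule: linorder_wlog)
  case (le a b)
  hence "k dvd (b + d) - (a + d)" using mod_eq_dvd_iff_nat[of "a+d" "b+d" k] by simp
  hence "k dvd b - a" by simp
  moreover have "b - a < k" using le by simp
  ultimately have "b - a = 0" using dvd_imp_le by (metis not_less zero_less_iff_neq_zero)
  then show ?case using le by simp
next
  case (sym a b) then show ?case by metis
qed

lemma closed_all:
  fixes k :: nat
  assumes "C \<subseteq> {..<k}" "x0 \<in> C" "\<forall>x\<in>C. (x+1) mod k \<in> C"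
  shows "C = {..<k}"
proof -
  have k: "0 < k" using assms by auto
  have all: "(x0 + n) mod k \<in> C" for n
  proof (induction n)
    case 0 then show ?case using assms by auto
  next
    case (Suc n)
    have "(x0 + Suc n) mod k = ((x0 + n) mod k + 1) mod k" by (simp add: mod_Suc_eq)
    then show ?case using Suc assms(3) by simp
  qed
  have "y \<in> C" if "y < k" for y
  proof -
    have "x0 < k" using assms by auto
    hence "x0 + (y + k - x0) = y + k" by simp
    hence "(x0 + (y + k - x0)) mod k = y" using that by simp
    then show ?thesis using all by metis
  qed
  then show ?thesis using assms by auto
qed

lemma grow:
  fixes k :: nat
  assumes "C \<subseteq> {..<k}" "C \<noteq> {}"
  shows "card (C \<union> (\<lambda>x. (x+1) mod k) ` C) \<ge> min k (card C + 1)"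
proof (cases "C = {..<k}")
  case True
  have "(\<lambda>x. (x+1) mod k) ` C \<subseteq> {..<k}" using assms by auto
  then show ?thesis using True by (simp add: Un_absorb2)
next
  case False
  obtain x0 where "x0 \<in> C" using assms by auto
  then obtain x where x: "x \<in> C" "(x+1) mod k \<notin> C" using closed_all[OF assms(1)] False by blast
  have f: "finite C" using assms(1) finite_subset by blast
  have "C \<subset> C \<union> (\<lambda>x. (x+1) mod k) ` C" using x by auto
  hence "card C < card (C \<union> (\<lambda>x. (x+1) mod k) ` C)" using f by (intro psubset_card_mono) auto
  then show ?thesis by simp
qed

definition TT :: "nat \<Rightarrow> nat \<Rightarrow> nat set \<Rightarrow> nat set" where
  "TT k j A = {(x + e) mod k | x e. x \<in> A \<and> e \<le> j}"

lemma TT_Suc: "TT k (Suc j) A = TT k j A \<union> (\<lambda>x. (x+1) mod k) ` TT k j A"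
proof
  show "TT k (Suc j) A \<subseteq> TT k j A \<union> (\<lambda>x. (x+1) mod k) ` TT k j A"
  proof
    fix z assume "z \<in> TT k (Suc j) A"
    then obtain x e where z: "z = (x + e) mod k" "x \<in> A" "e \<le> Suc j" unfolding TT_def by auto
    show "z \<in> TT k j A \<union> (\<lambda>x. (x+1) mod k) ` TT k j A"
    proof (cases "e \<le> j")
      case True then show ?thesis using z unfolding TT_def by auto
    next
      case False
      hence "e = Suc j" using z by auto
      hence "z = ((x + j) mod k + 1) mod k" using z by (simp add: mod_Suc_eq)
      moreover have "(x + j) mod k \<in> TT k j A" using z unfolding TT_def by auto
      ultimately show ?thesis by blast
    qed
  qed
next
  show "TT k j A \<union> (\<lambda>x. (x+1) mod k) ` TT k j A \<subseteq> TT k (Suc j) A"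
  proof
    fix z assume "z \<in> TT k j A \<union> (\<lambda>x. (x+1) mod k) ` TT k j A"
    then consider "z \<in> TT k j A" | y where "y \<in> TT k j A" "z = (y+1) mod k" by blast
    then show "z \<in> TT k (Suc j) A"
    proof cases
      case 1 then show ?thesis unfolding TT_def by fastforce
    next
      case 2
      then obtain x e where y: "y = (x + e) mod k" "x \<in> A" "e \<le> j" unfolding TT_def by auto
      hence "z = (x + Suc e) mod k" using 2 by (simp add: mod_Suc_eq)
      then show ?thesis using y unfolding TT_def by fastforce
    qed
  qed
qed

lemma TT_sub: "0 < k \<Longrightarrow> TT k j A \<subseteq> {..<k}"
  unfolding TT_def by auto

lemma TT_ne: "A \<noteq> {} \<Longrightarrow> TT k j A \<noteq> {}"
  unfolding TT_def by blast

lemma TT_0: "A \<subseteq> {..<k} \<Longrightarrow> TT k 0 A = A"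
  unfolding TT_def by force

lemma TT_card:
  assumes "A \<subseteq> {..<k}" "A \<noteq> {}" "0 < k"
  shows "card (TT k j A) \<ge> min k (card A + j)"
proof (induction j)
  case 0 then show ?case using TT_0[OF assms(1)] by simp
next
  case (Suc j)
  have "card (TT k (Suc j) A) \<ge> min k (card (TT k j A) + 1)"
    unfolding TT_Suc using grow[OF TT_sub[OF assms(3)] TT_ne[OF assms(2)]] .
  then show ?case using Suc by linarith
qed

lemma indep_bound:
  assumes "I \<subseteq> {..<k}" "\<forall>x\<in>I. \<forall>y\<in>I. \<not> circ_clique_adj k d x y" "0 < d" "2 * d \<le> k"
  shows "card I \<le> d"
proof (cases "I = {}")
  case True then show ?thesis by simp
next
  case False
  have k: "0 < k" using assms by auto
  define A where "A = (\<lambda>x. (x + d) mod k) ` I"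
  have inj: "inj_on (\<lambda>x. (x + d) mod k) I"
  proof
    fix x y assume xy: "x \<in> I" "y \<in> I" "(x + d) mod k = (y + d) mod k"
    have "x < k" "y < k" using xy assms by auto
    then show "x = y" using xy(3) using modinj by blast
  qed
  have cA: "card A = card I" unfolding A_def using inj by (simp add: card_image)
  have Asub: "A \<subseteq> {..<k}" "A \<noteq> {}" using False k unfolding A_def by auto
  define B where "B = TT k (k - 2*d) A"
  have cB: "card B \<ge> min k (card I + (k - 2*d))" using TT_card[OF Asub k] cA unfolding B_def by simp
  have disj: "B \<inter> I = {}"
  proof (rule ccontr)
    assume "B \<inter> I \<noteq> {}"
    then obtain z where z: "z \<in> B" "z \<in> I" by auto
    then obtain y e where y: "z = (y + e) mod k" "y \<in> A" "e \<le> k - 2*d" unfolding B_def TT_def by auto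
    then obtain x where x: "x \<in> I" "y = (x + d) mod k" unfolding A_def by auto
    have z2: "z = (x + (d + e)) mod k" using x y by (simp add: mod_add_left_eq add.assoc)
    have xk: "x < k" using x assms by auto
    have "circ_clique_adj k d x z"
    proof (cases "x + (d + e) < k")
      case True
      then show ?thesis using z2 xk y assms(4) unfolding circ_clique_adj_def by auto
    next
      case False
      have eq: "x + (d + e) = (x + (d + e) - k) + k" using False by simp
      have lt: "x + (d + e) - k < k" using xk y(3) assms(4) by linarith
      have "z = (x + (d + e) - k + k) mod k" using z2 eq by simp
      also have "\<dots> = x + (d + e) - k" using lt by simp
      finally have "z = x + (d + e) - k" .
      then show ?thesis using xk y(3) assms(4) False unfolding circ_clique_adj_def by auto
    qed
    then show False using assms(2) x z by blast
  qed
  have "B \<union> I \<subseteq> {..<k}" using TT_sub[OF k] assms(1) unfolding B_def by auto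
  hence "card (B \<union> I) \<le> k" by (metis card_lessThan card_mono finite_lessThan)
  moreover have "card (B \<union> I) = card B + card I" using disj
    by (meson \<open>B \<union> I \<subseteq> {..<k}\<close> card_Un_disjoint finite_Un finite_lessThan finite_subset)
  ultimately show ?thesis using cB by linarith
qed


theorem theorem2p2:
  fixes k d :: nat
  assumes "d > 0" and "k \<ge> 2 * d"
  shows "chromatic_number (circ_clique_vertices k) (circ_clique_adj k d)
           \<ge> boxicity (circ_clique_vertices k) (circ_clique_adj k d)"
proof -
  define V where "V = circ_clique_vertices k"
  define E where "E = circ_clique_adj k d"
  have V: "V = {..<k}" unfolding V_def circ_clique_vertices_def by simp
  have k0: "0 < k" using assms by linarith
  have ex: "proper_colouring V E k id"
    unfolding proper_colouring_def V E_def circ_clique_adj_def using assms(1) by auto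
  define n where "n = chromatic_number V E"
  have "\<exists>c. proper_colouring V E n c" unfolding n_def chromatic_number_def
    by (rule LeastI_ex) (use ex in blast)
  then obtain c where c: "proper_colouring V E n c" by blast
  have cls: "card {v\<in>V. c v = i} \<le> d" for i
  proof (rule indep_bound)
    show "{v\<in>V. c v = i} \<subseteq> {..<k}" using V by auto
    show "\<forall>x\<in>{v\<in>V. c v = i}. \<forall>y\<in>{v\<in>V. c v = i}. \<not> circ_clique_adj k d x y"
      using c unfolding proper_colouring_def E_def by (simp (no_asm_use)) blast
  qed (use assms in auto)
  have "V \<subseteq> (\<Union>i\<in>{..<n}. {v\<in>V. c v = i})" using c unfolding proper_colouring_def by auto
  hence "card V \<le> card (\<Union>i\<in>{..<n}. {v\<in>V. c v = i})"
    by (intro card_mono) (auto simp: V)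
  also have "\<dots> \<le> (\<Sum>i\<in>{..<n}. card {v\<in>V. c v = i})" by (rule card_UN_le) simp
  also have "\<dots> \<le> (\<Sum>i\<in>{..<n}. d)" by (rule sum_mono) (use cls in auto)
  finally have knd: "k \<le> n * d" using V by simp
  have n1: "1 \<le> n" using knd k0 by (cases n) auto
  define B where "B v t = (real (cpos k (ccut k d t) v), real (crgt k d (cpos k (ccut k d t) v)))" for v t
  have rep: "box_representation V E n B"
    unfolding box_representation_def
  proof (intro conjI ballI allI impI)
    fix v i assume "v \<in> V" "i < n"
    show "fst (B v i) \<le> snd (B v i)" unfolding B_def crgt_def by auto
  next
    fix u v assume uv: "u \<in> V" "v \<in> V" "u \<noteq> v"
    show "E u v = (\<forall>i<n. fst (B u i) \<le> snd (B v i) \<and> fst (B v i) \<le> snd (B u i))"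
    proof
      assume "E u v"
      then show "\<forall>i<n. fst (B u i) \<le> snd (B v i) \<and> fst (B v i) \<le> snd (B u i)"
        using edge_int[of k d u v] ccut_ok[of d k] assms k0 unfolding E_def B_def by auto
    next
      assume h: "\<forall>i<n. fst (B u i) \<le> snd (B v i) \<and> fst (B v i) \<le> snd (B u i)"
      show "E u v"
      proof (rule ccontr)
        assume ne: "\<not> E u v"
        have "\<exists>t<n. disj k d (ccut k d t) u v"
        proof (cases "u < v")
          case True then show ?thesis using nonedge_lt[of u v k d n] ne uv V assms knd
            unfolding E_def by auto
        next
          case False
          hence "v < u" using uv by auto
          moreover have "\<not> circ_clique_adj k d v u" using ne adj_sym unfolding E_def by blast
          ultimately obtain t where "t < n" "disj k d (ccut k d t) v u"
            using nonedge_lt[of v u k d n] uv V assms knd by auto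
          then show ?thesis unfolding disj_def by blast
        qed
        then show False using h unfolding disj_def B_def by auto
      qed
    qed
  qed
  have "boxicity V E \<le> n" unfolding boxicity_def
    by (rule Least_le) (use n1 rep in blast)
  then show ?thesis unfolding n_def V_def E_def .
qed

end
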